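(* The price of anarchy (supremum over all weights $w_1,w_2\ge0$ with $w_1+w_2>0$ and all instances, with respect to subgame-perfect equilibria) for sequential two-player weighted congestion games with affine costs and proportional cost functions is equal to $1.5$; for fixed weights, the price of anarchy equals $1.5$ if and only if $w_1=w_2$.
   Context: A weighted two-player congestion game with affine costs consists of a finite set $R$ of resources, coefficients $\alpha_r,\beta_r \geq 0$ for each $r\in R$, two players $i=1,2$ with weights $w_i\ge 0$, and for each player $i$ a nonempty finite set $\mathcal{A}_i \subseteq 2^R$ of actions. For an action profile $A=(A_1,A_2)$ the load of $r$ is $x_r(A)=\sum_{j:\, r\in A_j} w_j$. With proportional costs, player $i$ pays $C_i(A)=w_i\sum_{r\in A_i}(\alpha_r+\beta_r x_r(A))$. The social cost is $C(A)=C_1(A)+C_2(A)$. In the sequential game, player 1 chooses $A_1$ first, then player 2, knowing $A_1$, chooses $A_2$. A subgame-perfect equilibrium consists of a function $A_1\mapsto A_2^*(A_1)$ with $C_2(A_1,A_2^*(A_1))\le C_2(A_1,A_2)$ for all $A_1,A_2$, and an action $A_1^*$ with $C_1(A_1^*,A_2^*(A_1^* ))\le C_1(A_1,A_2^*(A_1))$ for all $A_1$; its outcome is $(A_1^*,A_2^*(A_1^* ))$. The price of anarchy of an instance is the maximum over subgame-perfect equilibrium outcomes $A$ of $C(A)/\min_{A'}C(A')$; the price of anarchy of a class (for fixed or arbitrary weights) is the supremum over all instances (with positive optimal social cost). *)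

theory Defs
  imports "HOL-Analysis.Analysis" "HOL-Library.Extended_Real"
begin

text \<open>Resources are natural numbers drawn from a finite set R; actions are subsets of R.
  An instance is (R, alpha, beta, X1, X2) where Xi is the action set of player i.\<close>

definition load :: "real \<Rightarrow> real \<Rightarrow> nat set \<Rightarrow> nat set \<Rightarrow> nat \<Rightarrow> real" where
  "load w1 w2 A1 A2 r = (if r \<in> A1 then w1 else 0) + (if r \<in> A2 then w2 else 0)"

definition cost1 :: "real \<Rightarrow> real \<Rightarrow> (nat \<Rightarrow> real) \<Rightarrow> (nat \<Rightarrow> real) \<Rightarrow> nat set \<Rightarrow> nat set \<Rightarrow> real" where
  "cost1 w1 w2 \<alpha> \<beta> A1 A2 = w1 * (\<Sum>r\<in>A1. \<alpha> r + \<beta> r * load w1 w2 A1 A2 r)"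

definition cost2 :: "real \<Rightarrow> real \<Rightarrow> (nat \<Rightarrow> real) \<Rightarrow> (nat \<Rightarrow> real) \<Rightarrow> nat set \<Rightarrow> nat set \<Rightarrow> real" where
  "cost2 w1 w2 \<alpha> \<beta> A1 A2 = w2 * (\<Sum>r\<in>A2. \<alpha> r + \<beta> r * load w1 w2 A1 A2 r)"

definition social_cost :: "real \<Rightarrow> real \<Rightarrow> (nat \<Rightarrow> real) \<Rightarrow> (nat \<Rightarrow> real) \<Rightarrow> nat set \<Rightarrow> nat set \<Rightarrow> real" where
  "social_cost w1 w2 \<alpha> \<beta> A1 A2 = cost1 w1 w2 \<alpha> \<beta> A1 A2 + cost2 w1 w2 \<alpha> \<beta> A1 A2"

definition valid_instance :: "nat set \<Rightarrow> (nat \<Rightarrow> real) \<Rightarrow> (nat \<Rightarrow> real) \<Rightarrow> nat set set \<Rightarrow> nat set set \<Rightarrow> bool" where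
  "valid_instance R \<alpha> \<beta> X1 X2 \<longleftrightarrow> finite R \<and> (\<forall>r\<in>R. \<alpha> r \<ge> 0 \<and> \<beta> r \<ge> 0)
     \<and> X1 \<noteq> {} \<and> X1 \<subseteq> Pow R \<and> X2 \<noteq> {} \<and> X2 \<subseteq> Pow R"

definition spe_outcomes :: "real \<Rightarrow> real \<Rightarrow> (nat \<Rightarrow> real) \<Rightarrow> (nat \<Rightarrow> real) \<Rightarrow> nat set set \<Rightarrow> nat set set
    \<Rightarrow> (nat set \<times> nat set) set" where
  "spe_outcomes w1 w2 \<alpha> \<beta> X1 X2 =
     {(A1, f A1) | A1 f. A1 \<in> X1
        \<and> (\<forall>B\<in>X1. f B \<in> X2 \<and> (\<forall>A2\<in>X2. cost2 w1 w2 \<alpha> \<beta> B (f B) \<le> cost2 w1 w2 \<alpha> \<beta> B A2))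
        \<and> (\<forall>B\<in>X1. cost1 w1 w2 \<alpha> \<beta> A1 (f A1) \<le> cost1 w1 w2 \<alpha> \<beta> B (f B))}"

definition opt_cost :: "real \<Rightarrow> real \<Rightarrow> (nat \<Rightarrow> real) \<Rightarrow> (nat \<Rightarrow> real) \<Rightarrow> nat set set \<Rightarrow> nat set set \<Rightarrow> real" where
  "opt_cost w1 w2 \<alpha> \<beta> X1 X2 = Min ((\<lambda>(A1, A2). social_cost w1 w2 \<alpha> \<beta> A1 A2) ` (X1 \<times> X2))"

definition poa_instance :: "real \<Rightarrow> real \<Rightarrow> (nat \<Rightarrow> real) \<Rightarrow> (nat \<Rightarrow> real) \<Rightarrow> nat set set \<Rightarrow> nat set set \<Rightarrow> ereal" where
  "poa_instance w1 w2 \<alpha> \<beta> X1 X2 =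
     (SUP A \<in> spe_outcomes w1 w2 \<alpha> \<beta> X1 X2.
        ereal (social_cost w1 w2 \<alpha> \<beta> (fst A) (snd A) / opt_cost w1 w2 \<alpha> \<beta> X1 X2))"

definition poa_weights :: "real \<Rightarrow> real \<Rightarrow> ereal" where
  "poa_weights w1 w2 =
     (SUP I \<in> {(R, \<alpha>, \<beta>, X1, X2). valid_instance R \<alpha> \<beta> X1 X2 \<and> opt_cost w1 w2 \<alpha> \<beta> X1 X2 > 0}.
        (case I of (R, \<alpha>, \<beta>, X1, X2) \<Rightarrow> poa_instance w1 w2 \<alpha> \<beta> X1 X2))"

end

theory Submission
  imports Defs
begin

definition rc1 :: "real \<Rightarrow> real \<Rightarrow> (nat \<Rightarrow> real) \<Rightarrow> (nat \<Rightarrow> real) \<Rightarrow> nat set \<Rightarrow> nat set \<Rightarrow> nat \<Rightarrow> real" where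
  "rc1 w1 w2 \<alpha> \<beta> S1 S2 r = (if r \<in> S1 then w1 * (\<alpha> r + \<beta> r * load w1 w2 S1 S2 r) else 0)"
definition rc2 :: "real \<Rightarrow> real \<Rightarrow> (nat \<Rightarrow> real) \<Rightarrow> (nat \<Rightarrow> real) \<Rightarrow> nat set \<Rightarrow> nat set \<Rightarrow> nat \<Rightarrow> real" where
  "rc2 w1 w2 \<alpha> \<beta> S1 S2 r = (if r \<in> S2 then w2 * (\<alpha> r + \<beta> r * load w1 w2 S1 S2 r) else 0)"

lemma per_res:
  fixes w1 w2 :: real
  assumes "w1 \<ge> 0" "w2 \<ge> 0" "\<alpha> r \<ge> 0" "\<beta> r \<ge> 0"
  defines "D \<equiv> w1*w1 + w2*w2" and "RD \<equiv> w1*w1 + w1*w2 + w2*w2"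
  shows "D * (rc1 w1 w2 \<alpha> \<beta> A1 A2 r + rc2 w1 w2 \<alpha> \<beta> A1 A2 r)
       - RD * (rc1 w1 w2 \<alpha> \<beta> O1 O2 r + rc2 w1 w2 \<alpha> \<beta> O1 O2 r)
       + D * (rc2 w1 w2 \<alpha> \<beta> A1 B2 r - rc2 w1 w2 \<alpha> \<beta> A1 A2 r)
       + RD * (rc2 w1 w2 \<alpha> \<beta> O1 O2 r - rc2 w1 w2 \<alpha> \<beta> O1 B2 r)
       + RD * (rc1 w1 w2 \<alpha> \<beta> O1 B2 r - rc1 w1 w2 \<alpha> \<beta> A1 A2 r) \<le> 0"
proof -
  define a where "a = \<alpha> r"
  define b where "b = \<beta> r"
  have a: "a \<ge> 0" and b: "b \<ge> 0" using assms by (auto simp: a_def b_def)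
  have m1: "0 \<le> a*w1*w2*w2" "0 \<le> a*w1*w1*w2" "0 \<le> b*w1*w2*w2*w2" "0 \<le> b*w1*w1*w2*w2" "0 \<le> b*w1*w1*w1*w2"
    using a b assms(1,2) by (simp_all add: mult_nonneg_nonneg)
  show ?thesis
    unfolding rc1_def rc2_def load_def D_def RD_def a_def[symmetric] b_def[symmetric]
    using m1
    by (cases "r \<in> A1"; cases "r \<in> A2"; cases "r \<in> O1"; cases "r \<in> O2"; cases "r \<in> B2";
        simp add: algebra_simps; linarith?)
qed


lemma cost1_sum:
  assumes "finite R" "S1 \<subseteq> R"
  shows "cost1 w1 w2 \<alpha> \<beta> S1 S2 = (\<Sum>r\<in>R. rc1 w1 w2 \<alpha> \<beta> S1 S2 r)"
proof -
  have "(\<Sum>r\<in>R. rc1 w1 w2 \<alpha> \<beta> S1 S2 r) = (\<Sum>r\<in>R \<inter> S1. w1 * (\<alpha> r + \<beta> r * load w1 w2 S1 S2 r))"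
    unfolding rc1_def using sum.inter_restrict[OF assms(1)] by metis
  also have "R \<inter> S1 = S1" using assms(2) by blast
  finally show ?thesis unfolding cost1_def by (simp add: sum_distrib_left)
qed

lemma cost2_sum:
  assumes "finite R" "S2 \<subseteq> R"
  shows "cost2 w1 w2 \<alpha> \<beta> S1 S2 = (\<Sum>r\<in>R. rc2 w1 w2 \<alpha> \<beta> S1 S2 r)"
proof -
  have "(\<Sum>r\<in>R. rc2 w1 w2 \<alpha> \<beta> S1 S2 r) = (\<Sum>r\<in>R \<inter> S2. w2 * (\<alpha> r + \<beta> r * load w1 w2 S1 S2 r))"
    unfolding rc2_def using sum.inter_restrict[OF assms(1)] by metis
  also have "R \<inter> S2 = S2" using assms(2) by blast
  finally show ?thesis unfolding cost2_def by (simp add: sum_distrib_left)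
qed

lemma main_bound:
  fixes w1 w2 :: real
  assumes w: "w1 \<ge> 0" "w2 \<ge> 0" and vi: "valid_instance R \<alpha> \<beta> X1 X2"
    and A: "A \<in> spe_outcomes w1 w2 \<alpha> \<beta> X1 X2"
  shows "(w1*w1 + w2*w2) * social_cost w1 w2 \<alpha> \<beta> (fst A) (snd A)
     \<le> (w1*w1 + w1*w2 + w2*w2) * opt_cost w1 w2 \<alpha> \<beta> X1 X2"
proof -
  define D where "D = w1*w1 + w2*w2"
  define RD where "RD = w1*w1 + w1*w2 + w2*w2"
  have D0: "D \<ge> 0" and RD0: "RD \<ge> 0" using w by (simp_all add: D_def RD_def)
  have fin: "finite R" and ab: "\<forall>r\<in>R. \<alpha> r \<ge> 0 \<and> \<beta> r \<ge> 0"
    and X1: "X1 \<noteq> {}" "X1 \<subseteq> Pow R" and X2: "X2 \<noteq> {}" "X2 \<subseteq> Pow R"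
    using vi unfolding valid_instance_def by auto
  obtain A1 f where Aeq: "A = (A1, f A1)" and A1: "A1 \<in> X1"
    and br: "\<forall>B\<in>X1. f B \<in> X2 \<and> (\<forall>A2\<in>X2. cost2 w1 w2 \<alpha> \<beta> B (f B) \<le> cost2 w1 w2 \<alpha> \<beta> B A2)"
    and p1: "\<forall>B\<in>X1. cost1 w1 w2 \<alpha> \<beta> A1 (f A1) \<le> cost1 w1 w2 \<alpha> \<beta> B (f B)"
    using A unfolding spe_outcomes_def by blast
  define A2 where "A2 = f A1"
  have finX: "finite (X1 \<times> X2)"
    using X1(2) X2(2) fin by (meson finite_Pow_iff finite_SigmaI finite_subset)
  have "opt_cost w1 w2 \<alpha> \<beta> X1 X2 \<in> (\<lambda>(A1, A2). social_cost w1 w2 \<alpha> \<beta> A1 A2) ` (X1 \<times> X2)"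
    unfolding opt_cost_def using finX X1 X2 by (intro Min_in) auto
  then obtain O1 O2 where O1: "O1 \<in> X1" and O2: "O2 \<in> X2"
    and Oeq: "opt_cost w1 w2 \<alpha> \<beta> X1 X2 = social_cost w1 w2 \<alpha> \<beta> O1 O2" by auto
  define B2 where "B2 = f O1"
  have A2X: "A2 \<in> X2" and B2X: "B2 \<in> X2" using br A1 O1 by (auto simp: A2_def B2_def)
  have k2: "cost2 w1 w2 \<alpha> \<beta> A1 A2 \<le> cost2 w1 w2 \<alpha> \<beta> A1 B2"
    using br A1 B2X by (auto simp: A2_def)
  have k3: "cost2 w1 w2 \<alpha> \<beta> O1 B2 \<le> cost2 w1 w2 \<alpha> \<beta> O1 O2"
    using br O1 O2 by (auto simp: B2_def)
  have k5: "cost1 w1 w2 \<alpha> \<beta> A1 A2 \<le> cost1 w1 w2 \<alpha> \<beta> O1 B2"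
    using p1 O1 by (auto simp: A2_def B2_def)
  have sub: "A1 \<subseteq> R" "A2 \<subseteq> R" "O1 \<subseteq> R" "O2 \<subseteq> R" "B2 \<subseteq> R"
    using A1 A2X O1 O2 B2X X1 X2 by auto
  let ?E = "\<lambda>r. D * (rc1 w1 w2 \<alpha> \<beta> A1 A2 r + rc2 w1 w2 \<alpha> \<beta> A1 A2 r)
       - RD * (rc1 w1 w2 \<alpha> \<beta> O1 O2 r + rc2 w1 w2 \<alpha> \<beta> O1 O2 r)
       + D * (rc2 w1 w2 \<alpha> \<beta> A1 B2 r - rc2 w1 w2 \<alpha> \<beta> A1 A2 r)
       + RD * (rc2 w1 w2 \<alpha> \<beta> O1 O2 r - rc2 w1 w2 \<alpha> \<beta> O1 B2 r)
       + RD * (rc1 w1 w2 \<alpha> \<beta> O1 B2 r - rc1 w1 w2 \<alpha> \<beta> A1 A2 r)"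
  have "sum ?E R \<le> 0"
    by (rule sum_nonpos) (use per_res[OF w] ab in \<open>auto simp: D_def RD_def\<close>)
  moreover have "sum ?E R = D * (cost1 w1 w2 \<alpha> \<beta> A1 A2 + cost2 w1 w2 \<alpha> \<beta> A1 A2)
       - RD * (cost1 w1 w2 \<alpha> \<beta> O1 O2 + cost2 w1 w2 \<alpha> \<beta> O1 O2)
       + D * (cost2 w1 w2 \<alpha> \<beta> A1 B2 - cost2 w1 w2 \<alpha> \<beta> A1 A2)
       + RD * (cost2 w1 w2 \<alpha> \<beta> O1 O2 - cost2 w1 w2 \<alpha> \<beta> O1 B2)
       + RD * (cost1 w1 w2 \<alpha> \<beta> O1 B2 - cost1 w1 w2 \<alpha> \<beta> A1 A2)"
    using sub fin
    by (simp add: cost1_sum[OF fin] cost2_sum[OF fin] sum.distrib sum_subtractf sum_distrib_left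
        distrib_left right_diff_distrib sum_negf)
  moreover have "0 \<le> D * (cost2 w1 w2 \<alpha> \<beta> A1 B2 - cost2 w1 w2 \<alpha> \<beta> A1 A2)"
    using D0 k2 by simp
  moreover have "0 \<le> RD * (cost2 w1 w2 \<alpha> \<beta> O1 O2 - cost2 w1 w2 \<alpha> \<beta> O1 B2)"
    using RD0 k3 by simp
  moreover have "0 \<le> RD * (cost1 w1 w2 \<alpha> \<beta> O1 B2 - cost1 w1 w2 \<alpha> \<beta> A1 A2)"
    using RD0 k5 by simp
  ultimately show ?thesis
    unfolding Aeq Oeq social_cost_def D_def[symmetric] RD_def[symmetric] A2_def[symmetric]
    by simp
qed

lemma poa_weights_le:
  fixes w1 w2 :: real
  assumes w: "w1 \<ge> 0" "w2 \<ge> 0" "w1 + w2 > 0"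
  shows "poa_weights w1 w2 \<le> ereal ((w1*w1 + w1*w2 + w2*w2) / (w1*w1 + w2*w2))"
  unfolding poa_weights_def
proof (rule SUP_least, clarsimp)
  fix R \<alpha> \<beta> X1 X2
  assume vi: "valid_instance R \<alpha> \<beta> X1 X2" and op: "opt_cost w1 w2 \<alpha> \<beta> X1 X2 > 0"
  have Dp: "w1*w1 + w2*w2 > 0"
  proof (cases "w1 > 0")
    case True then show ?thesis by (simp add: add_pos_nonneg)
  next
    case False then have "w2 > 0" using w by simp
    then show ?thesis by (simp add: add_nonneg_pos)
  qed
  show "poa_instance w1 w2 \<alpha> \<beta> X1 X2 \<le> ereal ((w1*w1 + w1*w2 + w2*w2) / (w1*w1 + w2*w2))"
    unfolding poa_instance_def
  proof (rule SUP_least)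
    fix A assume A: "A \<in> spe_outcomes w1 w2 \<alpha> \<beta> X1 X2"
    have h: "(w1*w1 + w2*w2) * social_cost w1 w2 \<alpha> \<beta> (fst A) (snd A)
     \<le> (w1*w1 + w1*w2 + w2*w2) * opt_cost w1 w2 \<alpha> \<beta> X1 X2"
      by (rule main_bound[OF w(1,2) vi A])
    have "social_cost w1 w2 \<alpha> \<beta> (fst A) (snd A) / opt_cost w1 w2 \<alpha> \<beta> X1 X2
        \<le> (w1*w1 + w1*w2 + w2*w2) / (w1*w1 + w2*w2)"
      using h Dp op by (simp add: divide_simps mult.commute)
    then show "ereal (social_cost w1 w2 \<alpha> \<beta> (fst A) (snd A) / opt_cost w1 w2 \<alpha> \<beta> X1 X2)
        \<le> ereal ((w1*w1 + w1*w2 + w2*w2) / (w1*w1 + w2*w2))" by simp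
  qed
qed


lemma ratio_le: "w1 \<ge> 0 \<Longrightarrow> w2 \<ge> 0 \<Longrightarrow> w1 + w2 > 0 \<Longrightarrow>
   (w1*w1 + w1*w2 + w2*w2) / (w1*w1 + w2*w2) \<le> 3/(2::real)
   \<and> (w1 \<noteq> w2 \<longrightarrow> (w1*w1 + w1*w2 + w2*w2) / (w1*w1 + w2*w2) < 3/2)"
proof -
  assume w: "w1 \<ge> 0" "w2 \<ge> 0" "w1 + w2 > 0"
  have Dp: "w1*w1 + w2*w2 > 0"
  proof (cases "w1 > 0")
    case True then show ?thesis by (simp add: add_pos_nonneg)
  next
    case False then have "w2 > 0" using w by simp
    then show ?thesis by (simp add: add_nonneg_pos)
  qed
  have sq: "0 \<le> (w1 - w2) * (w1 - w2)" by simp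
  have sq2: "w1 \<noteq> w2 \<Longrightarrow> 0 < (w1 - w2) * (w1 - w2)" by (auto simp: zero_less_mult_iff)
  show ?thesis using Dp sq sq2
    by (auto simp: divide_simps algebra_simps)
qed

lemma poa_eq_lower:
  fixes w :: real
  assumes w: "w > 0"
  shows "ereal (3/2) \<le> poa_weights w w"
proof -
  define R :: "nat set" where "R = {0,1,2}"
  define \<alpha> :: "nat \<Rightarrow> real" where "\<alpha> = (\<lambda>r. if r = 0 then w/2 else if r = 1 then w else 0)"
  define \<beta> :: "nat \<Rightarrow> real" where "\<beta> = (\<lambda>r. if r = 2 then 1/2 else 0)"
  define X1 :: "nat set set" where "X1 = {{2},{0}}"
  define X2 :: "nat set set" where "X2 = {{1},{2}}"
  define f :: "nat set \<Rightarrow> nat set" where "f = (\<lambda>B. if B = {2} then {1} else {2})"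
  have c: "cost1 w w \<alpha> \<beta> {2} {1} = w*w/2" "cost2 w w \<alpha> \<beta> {2} {1} = w*w"
     "cost1 w w \<alpha> \<beta> {2} {2} = w*w" "cost2 w w \<alpha> \<beta> {2} {2} = w*w"
     "cost1 w w \<alpha> \<beta> {0} {1} = w*w/2" "cost2 w w \<alpha> \<beta> {0} {1} = w*w"
     "cost1 w w \<alpha> \<beta> {0} {2} = w*w/2" "cost2 w w \<alpha> \<beta> {0} {2} = w*w/2"
    by (simp_all add: cost1_def cost2_def load_def \<alpha>_def \<beta>_def)
  have vi: "valid_instance R \<alpha> \<beta> X1 X2"
    using w by (auto simp: valid_instance_def R_def \<alpha>_def \<beta>_def X1_def X2_def)
  have ww: "w*w > 0" using w by simp
  have opt: "opt_cost w w \<alpha> \<beta> X1 X2 = w*w"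
    unfolding opt_cost_def
  proof (rule Min_eqI)
    show "finite ((\<lambda>(A1, A2). social_cost w w \<alpha> \<beta> A1 A2) ` (X1 \<times> X2))"
      by (simp add: X1_def X2_def)
    show "\<And>y. y \<in> (\<lambda>(A1, A2). social_cost w w \<alpha> \<beta> A1 A2) ` (X1 \<times> X2) \<Longrightarrow> w * w \<le> y"
      using ww by (auto simp: X1_def X2_def social_cost_def c c[unfolded One_nat_def])
    show "w * w \<in> (\<lambda>(A1, A2). social_cost w w \<alpha> \<beta> A1 A2) ` (X1 \<times> X2)"
      by (rule image_eqI[where x="({0},{2})"]) (auto simp: X1_def X2_def social_cost_def c c[unfolded One_nat_def])
  qed
  have spe: "({2},{1}) \<in> spe_outcomes w w \<alpha> \<beta> X1 X2"
    unfolding spe_outcomes_def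
    apply (rule CollectI)
    apply (rule exI[where x="{2}"], rule exI[where x=f])
    using ww by (auto simp: X1_def X2_def f_def c c[unfolded One_nat_def])
  have "ereal (3/2) = ereal (social_cost w w \<alpha> \<beta> (fst ({2::nat},{1::nat})) (snd ({2::nat},{1::nat})) / opt_cost w w \<alpha> \<beta> X1 X2)"
    using w by (simp add: opt social_cost_def c c[unfolded One_nat_def])
  also have "\<dots> \<le> poa_instance w w \<alpha> \<beta> X1 X2"
    unfolding poa_instance_def by (rule SUP_upper[OF spe])
  also have "\<dots> \<le> poa_weights w w"
    unfolding poa_weights_def
    by (rule SUP_upper2[where i="(R, \<alpha>, \<beta>, X1, X2)"]) (use vi opt ww in auto)
  finally show ?thesis .
qed

theorem corollary6:
  shows "(SUP w \<in> {(w1, w2). w1 \<ge> 0 \<and> w2 \<ge> 0 \<and> w1 + w2 > (0::real)}. poa_weights (fst w) (snd w)) = ereal (3/2)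
    \<and> (\<forall>w1 w2::real. w1 \<ge> 0 \<longrightarrow> w2 \<ge> 0 \<longrightarrow> w1 + w2 > 0 \<longrightarrow>
         (poa_weights w1 w2 = ereal (3/2) \<longleftrightarrow> w1 = w2))"
proof (intro conjI allI impI)
  have le: "poa_weights w1 w2 \<le> ereal (3/2)" if "w1 \<ge> 0" "w2 \<ge> 0" "w1 + w2 > 0" for w1 w2 :: real
  proof -
    have "poa_weights w1 w2 \<le> ereal ((w1*w1 + w1*w2 + w2*w2) / (w1*w1 + w2*w2))"
      by (rule poa_weights_le[OF that])
    also have "\<dots> \<le> ereal (3/2)" using ratio_le[OF that] by simp
    finally show ?thesis .
  qed
  have eq: "poa_weights w w = ereal (3/2)" if "w > 0" for w :: real
    using le[of w w] that poa_eq_lower[OF that] by (simp add: order_antisym)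
  show "(SUP w \<in> {(w1, w2). w1 \<ge> 0 \<and> w2 \<ge> 0 \<and> w1 + w2 > (0::real)}. poa_weights (fst w) (snd w)) = ereal (3/2)"
  proof (rule order_antisym)
    show "(SUP w \<in> {(w1, w2). w1 \<ge> 0 \<and> w2 \<ge> 0 \<and> w1 + w2 > (0::real)}. poa_weights (fst w) (snd w)) \<le> ereal (3/2)"
      by (rule SUP_least) (use le in auto)
    show "ereal (3/2) \<le> (SUP w \<in> {(w1, w2). w1 \<ge> 0 \<and> w2 \<ge> 0 \<and> w1 + w2 > (0::real)}. poa_weights (fst w) (snd w))"
      by (rule SUP_upper2[where i="(1,1)"]) (use eq[of 1] in auto)
  qed
  fix w1 w2 :: real
  assume w: "w1 \<ge> 0" "w2 \<ge> 0" "w1 + w2 > 0"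
  show "poa_weights w1 w2 = ereal (3/2) \<longleftrightarrow> w1 = w2"
  proof
    assume h: "poa_weights w1 w2 = ereal (3/2)"
    show "w1 = w2"
    proof (rule ccontr)
      assume ne: "w1 \<noteq> w2"
      have "poa_weights w1 w2 \<le> ereal ((w1*w1 + w1*w2 + w2*w2) / (w1*w1 + w2*w2))"
        by (rule poa_weights_le[OF w])
      also have "\<dots> < ereal (3/2)" using ratio_le[OF w] ne by simp
      finally show False using h by simp
    qed
  next
    assume "w1 = w2"
    then show "poa_weights w1 w2 = ereal (3/2)" using eq[of w1] w by simp
  qed
qed

end
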